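(* Let $X$ be a normed space and $Y$ a Banach space. Let $r,s$ and $\theta$ be nonnegative integer numbers with $p=r+s\neq1,3$. Suppose that an odd mapping $f:X\to Y$ satisfies $$\|D_f(x,y)\|\le\theta\|x\|^r\|y\|^s$$ for all $x,y\in X$. Then there exist a unique additive function $A:X\to Y$ and a unique cubic function $C:X\to Y$ satisfying $$\|f(x)-A(x)-C(x)\|\le\frac{\theta}{12}\left[\frac{1}{|2^p-2|}+\frac{1}{|2^p-8|}\right]\|x\|^p$$ for all $x\in X$.
   Context: For a mapping $f:X\to Y$ define $$D_f(x,y)=3f(x+3y)-f(3x+y)-12[f(x+y)+f(x-y)]+16[f(x)+f(y)]-12f(2y)+4f(2x)$$ for $x,y\in X$. A function $g:X\to Y$ is additive if $g(x+y)=g(x)+g(y)$ for all $x,y\in X$, and cubic if $g(x+2y)-3g(x+y)+3g(x)-g(x-y)=6g(y)$ for all $x,y\in X$. *)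

theory Defs
  imports "HOL-Analysis.Analysis"
begin

definition Dop :: "('a::real_normed_vector \<Rightarrow> 'b::real_normed_vector) \<Rightarrow> 'a \<Rightarrow> 'a \<Rightarrow> 'b" where
  "Dop f x y =
     3 *\<^sub>R f (x + 3 *\<^sub>R y) - f (3 *\<^sub>R x + y)
     - 12 *\<^sub>R (f (x + y) + f (x - y))
     + 16 *\<^sub>R (f x + f y)
     - 12 *\<^sub>R f (2 *\<^sub>R y) + 4 *\<^sub>R f (2 *\<^sub>R x)"

definition cubic :: "('a::real_normed_vector \<Rightarrow> 'b::real_normed_vector) \<Rightarrow> bool" where
  "cubic g \<longleftrightarrow> (\<forall>x y. g (x + 2 *\<^sub>R y) - 3 *\<^sub>R g (x + y) + 3 *\<^sub>R g x - g (x - y) = 6 *\<^sub>R g y)"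

end

theory Submission
  imports Defs
begin


lemma additive_of_D:
  fixes F :: "'a::real_normed_vector \<Rightarrow> 'b::real_normed_vector"
  assumes odd: "\<And>x. F (- x) = - F x" and dbl: "\<And>x. F (2 *\<^sub>R x) = 2 *\<^sub>R F x"
    and D: "\<And>x y. Dop F x y = 0"
  shows "Modules.additive F"
proof -
  have L: "F (3 *\<^sub>R x + y) = 6 *\<^sub>R F (x + y) - 3 *\<^sub>R F (x - y) - 8 *\<^sub>R F y" for x y
  proof -
    have d1: "3 *\<^sub>R F (x + 3 *\<^sub>R y) - F (3 *\<^sub>R x + y) - 12 *\<^sub>R (F (x + y) + F (x - y)) + 16 *\<^sub>R (F x + F y) - 12 *\<^sub>R (2 *\<^sub>R F y) + 4 *\<^sub>R (2 *\<^sub>R F x) = 0"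
      using D[of x y] unfolding Dop_def dbl .
    have e: "y + 3 *\<^sub>R x = 3 *\<^sub>R x + y" "3 *\<^sub>R y + x = x + 3 *\<^sub>R y" "y + x = x + y"
      by (simp_all add: add.commute)
    have o: "F (y - x) = - F (x - y)" using odd[of "x - y"] by simp
    have d2: "3 *\<^sub>R F (3 *\<^sub>R x + y) - F (x + 3 *\<^sub>R y) - 12 *\<^sub>R (F (x + y) + - F (x - y)) + 16 *\<^sub>R (F y + F x) - 12 *\<^sub>R (2 *\<^sub>R F x) + 4 *\<^sub>R (2 *\<^sub>R F y) = 0"
      using D[of y x] unfolding Dop_def dbl e o .
    have "8 *\<^sub>R (F (3 *\<^sub>R x + y) - (6 *\<^sub>R F (x + y) - 3 *\<^sub>R F (x - y) - 8 *\<^sub>R F y)) =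
      (3 *\<^sub>R F (x + 3 *\<^sub>R y) - F (3 *\<^sub>R x + y) - 12 *\<^sub>R (F (x + y) + F (x - y)) + 16 *\<^sub>R (F x + F y) - 12 *\<^sub>R (2 *\<^sub>R F y) + 4 *\<^sub>R (2 *\<^sub>R F x))
      + 3 *\<^sub>R (3 *\<^sub>R F (3 *\<^sub>R x + y) - F (x + 3 *\<^sub>R y) - 12 *\<^sub>R (F (x + y) + - F (x - y)) + 16 *\<^sub>R (F y + F x) - 12 *\<^sub>R (2 *\<^sub>R F x) + 4 *\<^sub>R (2 *\<^sub>R F y))"
      by norm
    with d1 d2 show ?thesis by simp
  qed
  have G: "F (2 *\<^sub>R u + v) = 6 *\<^sub>R F u - 3 *\<^sub>R F v - 4 *\<^sub>R F (u - v)" for u v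
  proof -
    have a1: "3 *\<^sub>R ((1/2) *\<^sub>R (u + v)) + (1/2) *\<^sub>R (u - v) = 2 *\<^sub>R u + v" by norm
    have a2: "(1/2) *\<^sub>R (u + v) + (1/2) *\<^sub>R (u - v) = u" by norm
    have a3: "(1/2) *\<^sub>R (u + v) - (1/2) *\<^sub>R (u - v) = v" by norm
    have a4: "F (u - v) = 2 *\<^sub>R F ((1/2) *\<^sub>R (u - v))"
      using dbl[of "(1/2) *\<^sub>R (u - v)"] by simp
    show ?thesis using L[of "(1/2) *\<^sub>R (u + v)" "(1/2) *\<^sub>R (u - v)"] unfolding a1 a2 a3 a4
      by simp
  qed
  show ?thesis
  proof
    fix a b :: 'a
    have q0: "2 *\<^sub>R b + (a - b) = a + b" by (simp add: algebra_simps scaleR_2)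
    have q1: "b - (a - b) = 2 *\<^sub>R b - a" by (simp add: algebra_simps scaleR_2)
    have q2: "2 *\<^sub>R a + (b - a) = a + b" by (simp add: algebra_simps scaleR_2)
    have q3: "a - (b - a) = 2 *\<^sub>R a - b" by (simp add: algebra_simps scaleR_2)
    have q4: "2 *\<^sub>R a + - b = 2 *\<^sub>R a - b" by (simp add: algebra_simps scaleR_2)
    have q5: "a - - b = a + b" by (simp add: algebra_simps scaleR_2)
    have q6: "2 *\<^sub>R b + - a = 2 *\<^sub>R b - a" by (simp add: algebra_simps scaleR_2)
    have q7: "b - - a = a + b" by (simp add: algebra_simps scaleR_2)
    note q = q0 q1 q2 q3 q4 q5 q6 q7
    have o: "F (b - a) = - F (a - b)" using odd[of "a - b"] by simp
    have g1: "F (a + b) = 6 *\<^sub>R F b - 3 *\<^sub>R F (a - b) - 4 *\<^sub>R F (2 *\<^sub>R b - a)"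
      using G[of b "a - b"] unfolding q .
    have g2: "F (a + b) = 6 *\<^sub>R F a - 3 *\<^sub>R (- F (a - b)) - 4 *\<^sub>R F (2 *\<^sub>R a - b)"
      using G[of a "b - a"] unfolding q o .
    have g3: "F (2 *\<^sub>R a - b) = 6 *\<^sub>R F a - 3 *\<^sub>R (- F b) - 4 *\<^sub>R F (a + b)"
      using G[of a "- b"] unfolding q odd .
    have g4: "F (2 *\<^sub>R b - a) = 6 *\<^sub>R F b - 3 *\<^sub>R (- F a) - 4 *\<^sub>R F (a + b)"
      using G[of b "- a"] unfolding q odd .
    have "(-30) *\<^sub>R (F (a + b) - (F a + F b)) =
       (F (a + b) - (6 *\<^sub>R F b - 3 *\<^sub>R F (a - b) - 4 *\<^sub>R F (2 *\<^sub>R b - a)))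
     + (F (a + b) - (6 *\<^sub>R F a - 3 *\<^sub>R (- F (a - b)) - 4 *\<^sub>R F (2 *\<^sub>R a - b)))
     - 4 *\<^sub>R (F (2 *\<^sub>R a - b) - (6 *\<^sub>R F a - 3 *\<^sub>R (- F b) - 4 *\<^sub>R F (a + b)))
     - 4 *\<^sub>R (F (2 *\<^sub>R b - a) - (6 *\<^sub>R F b - 3 *\<^sub>R (- F a) - 4 *\<^sub>R F (a + b)))"
      by norm
    note eq = this
    have z1: "F (a + b) - (6 *\<^sub>R F b - 3 *\<^sub>R F (a - b) - 4 *\<^sub>R F (2 *\<^sub>R b - a)) = 0"
      using g1 by simp
    have z2: "F (a + b) - (6 *\<^sub>R F a - 3 *\<^sub>R (- F (a - b)) - 4 *\<^sub>R F (2 *\<^sub>R a - b)) = 0"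
      using g2 by simp
    have z3: "F (2 *\<^sub>R a - b) - (6 *\<^sub>R F a - 3 *\<^sub>R (- F b) - 4 *\<^sub>R F (a + b)) = 0"
      using g3 by simp
    have z4: "F (2 *\<^sub>R b - a) - (6 *\<^sub>R F b - 3 *\<^sub>R (- F a) - 4 *\<^sub>R F (a + b)) = 0"
      using g4 by simp
    have "(-30) *\<^sub>R (F (a + b) - (F a + F b)) = 0" using eq unfolding z1 z2 z3 z4 by simp
    then show "F (a + b) = F a + F b" by simp
  qed
qed

lemma cubic_of_D:
  fixes F :: "'a::real_normed_vector \<Rightarrow> 'b::real_normed_vector"
  assumes odd: "\<And>x. F (- x) = - F x" and dbl: "\<And>x. F (2 *\<^sub>R x) = 8 *\<^sub>R F x"
    and D: "\<And>x y. Dop F x y = 0"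
  shows "cubic F"
proof -
  have K: "F (x + 3 *\<^sub>R y) = 6 *\<^sub>R F (x + y) + 3 *\<^sub>R F (x - y) - 8 *\<^sub>R F x + 24 *\<^sub>R F y" for x y
  proof -
    have d1: "3 *\<^sub>R F (x + 3 *\<^sub>R y) - F (3 *\<^sub>R x + y) - 12 *\<^sub>R (F (x + y) + F (x - y)) + 16 *\<^sub>R (F x + F y) - 12 *\<^sub>R (8 *\<^sub>R F y) + 4 *\<^sub>R (8 *\<^sub>R F x) = 0"
      using D[of x y] unfolding Dop_def dbl .
    have e: "y + 3 *\<^sub>R x = 3 *\<^sub>R x + y" "3 *\<^sub>R y + x = x + 3 *\<^sub>R y" "y + x = x + y"
      by (simp_all add: add.commute)
    have o: "F (y - x) = - F (x - y)" using odd[of "x - y"] by simp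
    have d2: "3 *\<^sub>R F (3 *\<^sub>R x + y) - F (x + 3 *\<^sub>R y) - 12 *\<^sub>R (F (x + y) + - F (x - y)) + 16 *\<^sub>R (F y + F x) - 12 *\<^sub>R (8 *\<^sub>R F x) + 4 *\<^sub>R (8 *\<^sub>R F y) = 0"
      using D[of y x] unfolding Dop_def dbl e o .
    have "8 *\<^sub>R (F (x + 3 *\<^sub>R y) - (6 *\<^sub>R F (x + y) + 3 *\<^sub>R F (x - y) - 8 *\<^sub>R F x + 24 *\<^sub>R F y)) =
      3 *\<^sub>R (3 *\<^sub>R F (x + 3 *\<^sub>R y) - F (3 *\<^sub>R x + y) - 12 *\<^sub>R (F (x + y) + F (x - y)) + 16 *\<^sub>R (F x + F y) - 12 *\<^sub>R (8 *\<^sub>R F y) + 4 *\<^sub>R (8 *\<^sub>R F x))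
      + (3 *\<^sub>R F (3 *\<^sub>R x + y) - F (x + 3 *\<^sub>R y) - 12 *\<^sub>R (F (x + y) + - F (x - y)) + 16 *\<^sub>R (F y + F x) - 12 *\<^sub>R (8 *\<^sub>R F x) + 4 *\<^sub>R (8 *\<^sub>R F y))"
      by norm
    then have "8 *\<^sub>R (F (x + 3 *\<^sub>R y) - (6 *\<^sub>R F (x + y) + 3 *\<^sub>R F (x - y) - 8 *\<^sub>R F x + 24 *\<^sub>R F y)) = 0"
      unfolding d1 d2 by simp
    then show ?thesis by simp
  qed
  show ?thesis unfolding cubic_def
  proof (intro allI)
    fix x y :: 'a
    have q1: "x - y + 3 *\<^sub>R y = x + 2 *\<^sub>R y" by norm
    have q2: "x - y + y = x" by simp
    have q3: "x - y - y = x - 2 *\<^sub>R y" by norm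
    have q4: "x + y + 3 *\<^sub>R (- y) = x - 2 *\<^sub>R y" by norm
    have q5: "x + y + - y = x" by simp
    have q6: "x + y - - y = x + 2 *\<^sub>R y" by norm
    have k1: "F (x + 2 *\<^sub>R y) = 6 *\<^sub>R F x + 3 *\<^sub>R F (x - 2 *\<^sub>R y) - 8 *\<^sub>R F (x - y) + 24 *\<^sub>R F y"
      using K[of "x - y" y] unfolding q1 q2 q3 .
    have k2: "F (x - 2 *\<^sub>R y) = 6 *\<^sub>R F x + 3 *\<^sub>R F (x + 2 *\<^sub>R y) - 8 *\<^sub>R F (x + y) + 24 *\<^sub>R (- F y)"
      using K[of "x + y" "- y"] unfolding q4 q5 q6 odd .
    have z1: "F (x + 2 *\<^sub>R y) - (6 *\<^sub>R F x + 3 *\<^sub>R F (x - 2 *\<^sub>R y) - 8 *\<^sub>R F (x - y) + 24 *\<^sub>R F y) = 0"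
      using k1 by simp
    have z2: "F (x - 2 *\<^sub>R y) - (6 *\<^sub>R F x + 3 *\<^sub>R F (x + 2 *\<^sub>R y) - 8 *\<^sub>R F (x + y) + 24 *\<^sub>R (- F y)) = 0"
      using k2 by simp
    have "(-8) *\<^sub>R (F (x + 2 *\<^sub>R y) - 3 *\<^sub>R F (x + y) + 3 *\<^sub>R F x - F (x - y) - 6 *\<^sub>R F y) =
      (F (x + 2 *\<^sub>R y) - (6 *\<^sub>R F x + 3 *\<^sub>R F (x - 2 *\<^sub>R y) - 8 *\<^sub>R F (x - y) + 24 *\<^sub>R F y))
      + 3 *\<^sub>R (F (x - 2 *\<^sub>R y) - (6 *\<^sub>R F x + 3 *\<^sub>R F (x + 2 *\<^sub>R y) - 8 *\<^sub>R F (x + y) + 24 *\<^sub>R (- F y)))"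
      by norm
    then have "(-8) *\<^sub>R (F (x + 2 *\<^sub>R y) - 3 *\<^sub>R F (x + y) + 3 *\<^sub>R F x - F (x - y) - 6 *\<^sub>R F y) = 0"
      unfolding z1 z2 by simp
    then show "F (x + 2 *\<^sub>R y) - 3 *\<^sub>R F (x + y) + 3 *\<^sub>R F x - F (x - y) = 6 *\<^sub>R F y"
      by simp
  qed
qed



lemma hyers:
  fixes \<phi> :: "'a::real_normed_vector \<Rightarrow> 'b::banach" and c b \<delta> M :: real and r s :: nat
  assumes c: "c > 0" and b: "b > 0" and \<delta>: "\<delta> \<ge> 0" and M: "M \<ge> 0" and q: "c ^ (r+s) < b"
    and bnd: "\<And>x. norm (\<phi> (c *\<^sub>R x) - b *\<^sub>R \<phi> x) \<le> \<delta> * norm x ^ (r+s)"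
    and odd: "\<And>x. \<phi> (-x) = - \<phi> x"
    and Db: "\<And>x y. norm (Dop \<phi> x y) \<le> M * norm x ^ r * norm y ^ s"
  shows "\<exists>T. (\<forall>x. T (-x) = - T x) \<and> (\<forall>x y. Dop T x y = 0) \<and> (\<forall>x. T (c *\<^sub>R x) = b *\<^sub>R T x)
     \<and> (\<forall>x. norm (\<phi> x - T x) \<le> \<delta> / (b - c^(r+s)) * norm x ^ (r+s))"
proof -
  define p where "p = r + s"
  define Q where "Q = c^p / b"
  have Q0: "0 \<le> Q" unfolding Q_def using c b by simp
  have Q1: "Q < 1" unfolding Q_def p_def using q b by simp
  have nQ: "norm Q < 1" using Q0 Q1 by simp
  define \<psi> where "\<psi> n x = (1/b^n) *\<^sub>R \<phi> ((c^n) *\<^sub>R x)" for n x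
  define d where "d x k = \<psi> (Suc k) x - \<psi> k x" for x k
  have dbound: "norm (d x k) \<le> \<delta> / b * norm x ^ p * Q ^ k" for x k
  proof -
    have e1: "c^Suc k *\<^sub>R x = c *\<^sub>R (c^k *\<^sub>R x)" by simp
    have e2: "(1/b^k) = (1/b^Suc k) * b" using b by simp
    have "d x k = (1/b^Suc k) *\<^sub>R (\<phi> (c *\<^sub>R (c^k *\<^sub>R x)) - b *\<^sub>R \<phi> (c^k *\<^sub>R x))"
      unfolding d_def \<psi>_def e1 e2 by (simp add: scaleR_diff_right)
    then have "norm (d x k) = (1/b^Suc k) * norm (\<phi> (c *\<^sub>R (c^k *\<^sub>R x)) - b *\<^sub>R \<phi> (c^k *\<^sub>R x))"
      using b by simp
    also have "\<dots> \<le> (1/b^Suc k) * (\<delta> * norm (c^k *\<^sub>R x) ^ p)"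
      using bnd[of "c^k *\<^sub>R x"] b unfolding p_def by (intro mult_left_mono) auto
    also have "\<dots> = \<delta> / b * norm x ^ p * Q ^ k"
      using c b unfolding Q_def by (simp add: power_mult_distrib power_divide field_simps flip: power_mult)
    finally show ?thesis .
  qed
  have sumg: "summable (\<lambda>k. \<delta> / b * norm x ^ p * Q ^ k)" for x
    by (intro summable_mult summable_geometric nQ)
  have sumd: "summable (d x)" for x
    by (rule summable_comparison_test'[OF sumg dbound])
  have sumnd: "summable (\<lambda>k. norm (d x k))" for x
    by (rule summable_comparison_test'[OF sumg[of x]]) (simp only: norm_ge_zero abs_norm_cancel real_norm_def dbound)
  define T where "T x = \<phi> x + suminf (d x)" for x
  have psi_eq: "\<psi> n x = \<phi> x + (\<Sum>k<n. d x k)" for n x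
  proof -
    have "(\<Sum>k<n. d x k) = \<psi> n x - \<psi> 0 x" unfolding d_def by (rule sum_lessThan_telescope)
    moreover have "\<psi> 0 x = \<phi> x" by (simp add: \<psi>_def)
    ultimately show ?thesis by simp
  qed
  have lim: "(\<lambda>n. \<psi> n x) \<longlonglongrightarrow> T x" for x
    unfolding psi_eq T_def by (intro tendsto_add tendsto_const summable_LIMSEQ sumd)
  have est: "norm (\<phi> x - T x) \<le> \<delta> / (b - c^(r+s)) * norm x ^ (r+s)" for x
  proof -
    have "norm (\<phi> x - T x) = norm (suminf (d x))" unfolding T_def by (simp add: norm_minus_commute)
    also have "\<dots> \<le> (\<Sum>k. norm (d x k))" by (rule summable_norm[OF sumnd])
    also have "\<dots> \<le> (\<Sum>k. \<delta> / b * norm x ^ p * Q ^ k)"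
      by (rule suminf_le[OF dbound sumnd sumg])
    also have "\<dots> = \<delta> / b * norm x ^ p * (1 / (1 - Q))"
      using suminf_mult[OF summable_geometric[OF nQ], of "\<delta> / b * norm x ^ p"]
        suminf_geometric[OF nQ] by simp
    also have "\<dots> = \<delta> / (b - c^(r+s)) * norm x ^ (r+s)"
      using b Q1 unfolding Q_def p_def by (simp add: field_simps)
    finally show ?thesis .
  qed
  have scal: "T (c *\<^sub>R x) = b *\<^sub>R T x" for x
  proof -
    have "\<psi> n (c *\<^sub>R x) = b *\<^sub>R \<psi> (Suc n) x" for n
      unfolding \<psi>_def using b by (simp add: mult.commute)
    then have "(\<lambda>n. \<psi> n (c *\<^sub>R x)) \<longlonglongrightarrow> b *\<^sub>R T x"
      using tendsto_scaleR[OF tendsto_const LIMSEQ_Suc[OF lim[of x]], of b] by simp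
    then show ?thesis using lim[of "c *\<^sub>R x"] LIMSEQ_unique by blast
  qed
  have oddT: "T (-x) = - T x" for x
  proof -
    have "\<psi> n (-x) = - \<psi> n x" for n unfolding \<psi>_def by (simp add: odd)
    then have "(\<lambda>n. \<psi> n (-x)) \<longlonglongrightarrow> - T x" using tendsto_minus[OF lim[of x]] by simp
    then show ?thesis using lim[of "-x"] LIMSEQ_unique by blast
  qed
  have DT: "Dop T x y = 0" for x y
  proof -
    have l1: "(\<lambda>n. Dop (\<psi> n) x y) \<longlonglongrightarrow> Dop T x y"
      unfolding Dop_def by (intro tendsto_intros lim)
    have eqD: "Dop (\<psi> n) x y = (1/b^n) *\<^sub>R Dop \<phi> (c^n *\<^sub>R x) (c^n *\<^sub>R y)" for n
      unfolding Dop_def \<psi>_def by (simp add: algebra_simps)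
    have nb: "norm (Dop (\<psi> n) x y) \<le> M * norm x ^ r * norm y ^ s * Q ^ n" for n
    proof -
      have "norm (Dop (\<psi> n) x y) = (1/b^n) * norm (Dop \<phi> (c^n *\<^sub>R x) (c^n *\<^sub>R y))"
        unfolding eqD using b by simp
      also have "\<dots> \<le> (1/b^n) * (M * norm (c^n *\<^sub>R x) ^ r * norm (c^n *\<^sub>R y) ^ s)"
        using b by (intro mult_left_mono Db) simp
      also have "\<dots> = M * norm x ^ r * norm y ^ s * Q ^ n"
        using c b unfolding Q_def p_def
        by (simp add: power_mult_distrib power_divide power_add field_simps flip: power_mult)
      finally show ?thesis .
    qed
    have "(\<lambda>n. M * norm x ^ r * norm y ^ s * Q ^ n) \<longlonglongrightarrow> 0"
      using tendsto_mult[OF tendsto_const LIMSEQ_power_zero[OF nQ], of "M * norm x ^ r * norm y ^ s"] by simp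
    then have "(\<lambda>n. Dop (\<psi> n) x y) \<longlonglongrightarrow> 0"
      by (rule Lim_null_comparison[rotated]) (simp add: nb)
    then show ?thesis using l1 LIMSEQ_unique by blast
  qed
  show ?thesis using oddT DT scal est by blast
qed



lemma stab:
  fixes \<phi> :: "'a::real_normed_vector \<Rightarrow> 'b::banach" and a \<epsilon> M :: real and r s :: nat
  assumes a: "a > 0" and \<epsilon>: "\<epsilon> \<ge> 0" and M: "M \<ge> 0" and ne: "(2::real)^(r+s) \<noteq> a"
    and bnd: "\<And>x. norm (\<phi> (2 *\<^sub>R x) - a *\<^sub>R \<phi> x) \<le> \<epsilon> * norm x ^ (r+s)"
    and odd: "\<And>x. \<phi> (-x) = - \<phi> x"
    and Db: "\<And>x y. norm (Dop \<phi> x y) \<le> M * norm x ^ r * norm y ^ s"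
  shows "\<exists>T. (\<forall>x. T (-x) = - T x) \<and> (\<forall>x y. Dop T x y = 0) \<and> (\<forall>x. T (2 *\<^sub>R x) = a *\<^sub>R T x)
     \<and> (\<forall>x. norm (\<phi> x - T x) \<le> \<epsilon> / \<bar>a - 2^(r+s)\<bar> * norm x ^ (r+s))"
proof (cases "(2::real)^(r+s) < a")
  case True
  from hyers[of 2 a \<epsilon> M r s \<phi>, OF _ a \<epsilon> M True bnd odd Db]
  obtain T where T: "\<forall>x. T (-x) = - T x" "\<forall>x y. Dop T x y = 0" "\<forall>x. T (2 *\<^sub>R x) = a *\<^sub>R T x"
     "\<forall>x. norm (\<phi> x - T x) \<le> \<epsilon> / (a - 2^(r+s)) * norm x ^ (r+s)" by auto
  have "\<bar>a - 2^(r+s)\<bar> = a - 2^(r+s)" using True by simp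
  then show ?thesis using T by (intro exI[of _ T]) auto
next
  case False
  with ne have lt: "a < (2::real)^(r+s)" by simp
  define p where "p = r + s"
  have q: "(1/2::real)^(r+s) < 1/a" using lt a by (simp add: power_divide divide_simps)
  have bnd2: "norm (\<phi> ((1/2) *\<^sub>R x) - (1/a) *\<^sub>R \<phi> x) \<le> \<epsilon> / (a * 2^(r+s)) * norm x ^ (r+s)" for x
  proof -
    define y where "y = (1/2::real) *\<^sub>R x"
    have xy: "x = 2 *\<^sub>R y" unfolding y_def by simp
    have "\<phi> y - (1/a) *\<^sub>R \<phi> (2 *\<^sub>R y) = - (1/a) *\<^sub>R (\<phi> (2 *\<^sub>R y) - a *\<^sub>R \<phi> y)"
      using a by (simp add: algebra_simps)
    then have "norm (\<phi> y - (1/a) *\<^sub>R \<phi> (2 *\<^sub>R y)) = (1/a) * norm (\<phi> (2 *\<^sub>R y) - a *\<^sub>R \<phi> y)"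
      using a by simp
    also have "\<dots> \<le> (1/a) * (\<epsilon> * norm y ^ (r+s))" using a bnd[of y] by (intro mult_left_mono) auto
    also have "\<dots> = \<epsilon> / (a * 2^(r+s)) * norm x ^ (r+s)"
      unfolding y_def using a by (simp add: power_divide)
    finally show ?thesis unfolding y_def[symmetric] xy[symmetric] .
  qed
  have \<delta>: "\<epsilon> / (a * 2^(r+s)) \<ge> 0" using \<epsilon> a by simp
  from hyers[of "1/2" "1/a" "\<epsilon> / (a * 2^(r+s))" M r s \<phi>, OF _ _ \<delta> M q bnd2 odd Db] a
  obtain T where T: "\<forall>x. T (-x) = - T x" "\<forall>x y. Dop T x y = 0" "\<forall>x. T ((1/2) *\<^sub>R x) = (1/a) *\<^sub>R T x"
     "\<forall>x. norm (\<phi> x - T x) \<le> \<epsilon> / (a * 2^(r+s)) / (1/a - (1/2)^(r+s)) * norm x ^ (r+s)" by auto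
  have T2: "T (2 *\<^sub>R x) = a *\<^sub>R T x" for x
    using T(3)[rule_format, of "2 *\<^sub>R x"] a by simp
  have "\<epsilon> / (a * 2^(r+s)) / (1/a - (1/2)^(r+s)) = \<epsilon> / \<bar>a - 2^(r+s)\<bar>"
    using lt a by (simp add: power_divide field_simps)
  then show ?thesis using T T2 by (intro exI[of _ T]) auto
qed



lemma vanish:
  fixes v1 v2 :: "'b::real_normed_vector" and t1 t2 t3 K :: real
  assumes bnd: "\<And>n. norm (t1^n *\<^sub>R v1 + t2^n *\<^sub>R v2) \<le> K * t3^n"
    and t2: "t2 > 0" and t1: "\<bar>t1\<bar> < t2" and t3: "0 \<le> t3" "t3 < t2"
  shows "v2 = 0"
proof -
  have ub: "norm v2 \<le> K * (t3/t2)^n + (\<bar>t1\<bar>/t2)^n * norm v1" for n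
  proof -
    have "v2 = (1/t2^n) *\<^sub>R (t1^n *\<^sub>R v1 + t2^n *\<^sub>R v2) - (t1/t2)^n *\<^sub>R v1"
      using t2 by (simp add: scaleR_add_right power_divide)
    then have "norm v2 \<le> norm ((1/t2^n) *\<^sub>R (t1^n *\<^sub>R v1 + t2^n *\<^sub>R v2)) + norm ((t1/t2)^n *\<^sub>R v1)"
      by (metis norm_triangle_ineq4)
    also have "\<dots> = (1/t2^n) * norm (t1^n *\<^sub>R v1 + t2^n *\<^sub>R v2) + (\<bar>t1\<bar>/t2)^n * norm v1"
      using t2 by (simp add: power_abs abs_divide)
    also have "\<dots> \<le> (1/t2^n) * (K * t3^n) + (\<bar>t1\<bar>/t2)^n * norm v1"
      using t2 bnd[of n] by (intro add_right_mono mult_left_mono) auto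
    also have "(1/t2^n) * (K * t3^n) = K * (t3/t2)^n" by (simp add: power_divide)
    finally show ?thesis .
  qed
  have q1: "norm (t3/t2) < 1" using t2 t3 by simp
  have q2: "norm (\<bar>t1\<bar>/t2) < 1" using t2 t1 by simp
  have "(\<lambda>n. K * (t3/t2)^n + (\<bar>t1\<bar>/t2)^n * norm v1) \<longlonglongrightarrow> K * 0 + 0 * norm v1"
    by (intro tendsto_intros LIMSEQ_power_zero q1 q2)
  then have "norm v2 \<le> K * 0 + 0 * norm v1"
    by (rule LIMSEQ_le_const) (use ub in auto)
  then show ?thesis by simp
qed

lemma scal_pow:
  fixes F :: "'a::real_vector \<Rightarrow> 'b::real_vector"
  assumes "\<And>y. F (t *\<^sub>R y) = k *\<^sub>R F y"
  shows "F (t^n *\<^sub>R y) = k^n *\<^sub>R F y"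
proof (induction n)
  case 0 then show ?case by simp
next
  case (Suc n)
  have "F (t^Suc n *\<^sub>R y) = F (t *\<^sub>R (t^n *\<^sub>R y))" by simp
  also have "\<dots> = k *\<^sub>R F (t^n *\<^sub>R y)" by (rule assms)
  finally show ?case using Suc by simp
qed

lemma cubic_props:
  fixes g :: "'a::real_normed_vector \<Rightarrow> 'b::real_normed_vector"
  assumes "cubic g"
  shows "g (2 *\<^sub>R y) = 8 *\<^sub>R g y"
proof -
  have C: "\<And>x y. g (x + 2 *\<^sub>R y) - 3 *\<^sub>R g (x + y) + 3 *\<^sub>R g x - g (x - y) = 6 *\<^sub>R g y"
    using assms unfolding cubic_def by blast
  have g0: "g 0 = 0" using C[of 0 0] by simp
  have h1: "g (2 *\<^sub>R z) - 3 *\<^sub>R g z - g (- z) = 6 *\<^sub>R g z" for z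
    using C[of 0 z] g0 by simp
  have e1: "- z + 2 *\<^sub>R z = z" "- z - z = - (2 *\<^sub>R z)" for z :: 'a by (simp_all add: algebra_simps scaleR_2)
  have h2: "g z + 3 *\<^sub>R g (- z) - g (- (2 *\<^sub>R z)) = 6 *\<^sub>R g z" for z
    using C[of "- z" z] g0 unfolding e1 by simp
  have h3: "g (- (2 *\<^sub>R z)) - 3 *\<^sub>R g (- z) - g z = 6 *\<^sub>R g (- z)" for z
    using h1[of "- z"] by simp
  have z1: "g (2 *\<^sub>R y) - 3 *\<^sub>R g y - g (- y) - 6 *\<^sub>R g y = 0" using h1[of y] by simp
  have z2: "g y + 3 *\<^sub>R g (- y) - g (- (2 *\<^sub>R y)) - 6 *\<^sub>R g y = 0" using h2[of y] by simp
  have z3: "g (- (2 *\<^sub>R y)) - 3 *\<^sub>R g (- y) - g y - 6 *\<^sub>R g (- y) = 0" using h3[of y] by simp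
  have oddy: "6 *\<^sub>R (g (- y) + g y) = - (g y + 3 *\<^sub>R g (- y) - g (- (2 *\<^sub>R y)) - 6 *\<^sub>R g y) - (g (- (2 *\<^sub>R y)) - 3 *\<^sub>R g (- y) - g y - 6 *\<^sub>R g (- y))"
    by norm
  then have z4: "g (- y) + g y = 0" unfolding z2 z3 by simp
  have "g (2 *\<^sub>R y) - 8 *\<^sub>R g y = (g (2 *\<^sub>R y) - 3 *\<^sub>R g y - g (- y) - 6 *\<^sub>R g y) + (g (- y) + g y)"
    by norm
  then have "g (2 *\<^sub>R y) - 8 *\<^sub>R g y = 0" unfolding z1 z4 by simp
  then show ?thesis by simp
qed



theorem corollary3p5:
  fixes f :: "'a::real_normed_vector \<Rightarrow> 'b::banach"
    and r s :: nat and \<theta> :: real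
  assumes theta_nonneg: "\<theta> \<ge> 0"
    and p_ne1: "r + s \<noteq> 1" and p_ne3: "r + s \<noteq> 3"
    and odd: "\<And>x. f (- x) = - f x"
    and approx: "\<And>x y. norm (Dop f x y) \<le> \<theta> * norm x ^ r * norm y ^ s"
  shows "\<exists>!AC. Modules.additive (fst AC) \<and> cubic (snd AC) \<and>
           (\<forall>x. norm (f x - fst AC x - snd AC x)
                 \<le> \<theta> / 12 * (1 / \<bar>(2::real) ^ (r + s) - 2\<bar> + 1 / \<bar>(2::real) ^ (r + s) - 8\<bar>) * norm x ^ (r + s))"
proof -
  define p where "p = r + s"
  define K where "K = \<theta> / 12 * (1 / \<bar>(2::real) ^ p - 2\<bar> + 1 / \<bar>(2::real) ^ p - 8\<bar>)"
  have f0: "f 0 = 0"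
  proof -
    have e: "f 0 = - f 0" using odd[of 0] by simp
    have "f 0 + f 0 = 0" by (subst (2) e) simp
    then have "2 *\<^sub>R f 0 = 0" by (simp add: scaleR_2)
    then show ?thesis by simp
  qed
  have dxx: "norm (f (2 *\<^sub>R (2 *\<^sub>R x)) - 10 *\<^sub>R f (2 *\<^sub>R x) + 16 *\<^sub>R f x) \<le> \<theta> / 2 * norm x ^ p" for x
  proof -
    have e1: "x + 3 *\<^sub>R x = 2 *\<^sub>R (2 *\<^sub>R x)" by norm
    have e2: "3 *\<^sub>R x + x = 2 *\<^sub>R (2 *\<^sub>R x)" by norm
    have e3: "x + x = 2 *\<^sub>R x" by (simp add: scaleR_2)
    have e4: "x - x = 0" by simp
    note e = e1 e2 e3 e4
    have "Dop f x x = 3 *\<^sub>R f (2 *\<^sub>R (2 *\<^sub>R x)) - f (2 *\<^sub>R (2 *\<^sub>R x)) - 12 *\<^sub>R (f (2 *\<^sub>R x) + 0) + 16 *\<^sub>R (f x + f x) - 12 *\<^sub>R f (2 *\<^sub>R x) + 4 *\<^sub>R f (2 *\<^sub>R x)"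
      unfolding Dop_def e f0 ..
    also have "\<dots> = 2 *\<^sub>R (f (2 *\<^sub>R (2 *\<^sub>R x)) - 10 *\<^sub>R f (2 *\<^sub>R x) + 16 *\<^sub>R f x)" by norm
    finally have "2 * norm (f (2 *\<^sub>R (2 *\<^sub>R x)) - 10 *\<^sub>R f (2 *\<^sub>R x) + 16 *\<^sub>R f x) \<le> \<theta> * norm x ^ r * norm x ^ s"
      using approx[of x x] by simp
    then show ?thesis unfolding p_def by (simp add: power_add)
  qed
  define g where "g x = f (2 *\<^sub>R x) - 8 *\<^sub>R f x" for x
  define h where "h x = f (2 *\<^sub>R x) - 2 *\<^sub>R f x" for x
  have gb: "norm (g (2 *\<^sub>R x) - 2 *\<^sub>R g x) \<le> \<theta> / 2 * norm x ^ p" for x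
  proof -
    have "g (2 *\<^sub>R x) - 2 *\<^sub>R g x = f (2 *\<^sub>R (2 *\<^sub>R x)) - 10 *\<^sub>R f (2 *\<^sub>R x) + 16 *\<^sub>R f x"
      unfolding g_def by norm
    then show ?thesis using dxx[of x] by simp
  qed
  have hb: "norm (h (2 *\<^sub>R x) - 8 *\<^sub>R h x) \<le> \<theta> / 2 * norm x ^ p" for x
  proof -
    have "h (2 *\<^sub>R x) - 8 *\<^sub>R h x = f (2 *\<^sub>R (2 *\<^sub>R x)) - 10 *\<^sub>R f (2 *\<^sub>R x) + 16 *\<^sub>R f x"
      unfolding h_def by norm
    then show ?thesis using dxx[of x] by simp
  qed
  have D2: "norm (Dop f (2 *\<^sub>R x) (2 *\<^sub>R y)) \<le> 2^p * \<theta> * norm x ^ r * norm y ^ s" for x y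
    using approx[of "2 *\<^sub>R x" "2 *\<^sub>R y"] unfolding p_def by (simp add: power_mult_distrib power_add mult_ac)
  have Dlin: "Dop (\<lambda>x. f (2 *\<^sub>R x) - k *\<^sub>R f x) x y = Dop f (2 *\<^sub>R x) (2 *\<^sub>R y) - k *\<^sub>R Dop f x y" for k x y
    unfolding Dop_def by (simp add: algebra_simps)
  have Dk: "norm (Dop (\<lambda>x. f (2 *\<^sub>R x) - k *\<^sub>R f x) x y) \<le> (2^p + \<bar>k\<bar>) * \<theta> * norm x ^ r * norm y ^ s" for k x y
  proof -
    have "norm (Dop (\<lambda>x. f (2 *\<^sub>R x) - k *\<^sub>R f x) x y) \<le> norm (Dop f (2 *\<^sub>R x) (2 *\<^sub>R y)) + \<bar>k\<bar> * norm (Dop f x y)"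
      unfolding Dlin using norm_triangle_ineq4 by (metis norm_scaleR)
    also have "\<dots> \<le> 2^p * \<theta> * norm x ^ r * norm y ^ s + \<bar>k\<bar> * (\<theta> * norm x ^ r * norm y ^ s)"
      by (intro add_mono D2 mult_left_mono approx) simp
    finally show ?thesis by (simp add: algebra_simps)
  qed
  have gD: "norm (Dop g x y) \<le> (2^p + 8) * \<theta> * norm x ^ r * norm y ^ s" for x y
    using Dk[of 8 x y] unfolding g_def[abs_def] by simp
  have hD: "norm (Dop h x y) \<le> (2^p + 2) * \<theta> * norm x ^ r * norm y ^ s" for x y
    using Dk[of 2 x y] unfolding h_def[abs_def] by simp
  have godd: "g (- x) = - g x" for x unfolding g_def using odd by (simp add: algebra_simps)
  have hodd: "h (- x) = - h x" for x unfolding h_def using odd by (simp add: algebra_simps)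
  have th2: "\<theta> / 2 \<ge> 0" using theta_nonneg by simp
  have ne2: "(2::real)^(r+s) \<noteq> 2"
  proof
    assume "(2::real)^(r+s) = 2"
    then have "(2::real)^(r+s) = 2^1" by simp
    then show False using p_ne1 by (subst (asm) power_inject_exp) auto
  qed
  have ne8: "(2::real)^(r+s) \<noteq> 8"
  proof
    assume "(2::real)^(r+s) = 8"
    then have "(2::real)^(r+s) = 2^3" by simp
    then show False using p_ne3 by (subst (asm) power_inject_exp) auto
  qed
  obtain A0 where A0: "\<forall>x. A0 (-x) = - A0 x" "\<forall>x y. Dop A0 x y = 0" "\<forall>x. A0 (2 *\<^sub>R x) = 2 *\<^sub>R A0 x"
     "\<forall>x. norm (g x - A0 x) \<le> \<theta> / 2 / \<bar>2 - 2^(r+s)\<bar> * norm x ^ (r+s)"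
    using stab[of 2 "\<theta>/2" "(2^p + 8) * \<theta>" r s g, OF _ th2 _ ne2 gb[unfolded p_def] godd gD]
      theta_nonneg by auto
  obtain C0 where C0: "\<forall>x. C0 (-x) = - C0 x" "\<forall>x y. Dop C0 x y = 0" "\<forall>x. C0 (2 *\<^sub>R x) = 8 *\<^sub>R C0 x"
     "\<forall>x. norm (h x - C0 x) \<le> \<theta> / 2 / \<bar>8 - 2^(r+s)\<bar> * norm x ^ (r+s)"
    using stab[of 8 "\<theta>/2" "(2^p + 2) * \<theta>" r s h, OF _ th2 _ ne8 hb[unfolded p_def] hodd hD]
      theta_nonneg by auto
  have addA0: "Modules.additive A0" by (rule additive_of_D) (use A0 in auto)
  have cubC0: "cubic C0" by (rule cubic_of_D) (use C0 in auto)
  define A where "A x = (- (1/6::real)) *\<^sub>R A0 x" for x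
  define C where "C x = (1/6::real) *\<^sub>R C0 x" for x
  have addA: "Modules.additive A"
    unfolding A_def by (rule additive.intro) (simp add: additive.add[OF addA0] scaleR_add_right)
  have cubC: "cubic C" unfolding cubic_def
  proof (intro allI)
    fix x y :: 'a
    have c0: "C0 (x + 2 *\<^sub>R y) - 3 *\<^sub>R C0 (x + y) + 3 *\<^sub>R C0 x - C0 (x - y) = 6 *\<^sub>R C0 y"
      using cubC0 unfolding cubic_def by blast
    have "C (x + 2 *\<^sub>R y) - 3 *\<^sub>R C (x + y) + 3 *\<^sub>R C x - C (x - y)
       = (1/6::real) *\<^sub>R (C0 (x + 2 *\<^sub>R y) - 3 *\<^sub>R C0 (x + y) + 3 *\<^sub>R C0 x - C0 (x - y))"
      unfolding C_def by norm
    also have "\<dots> = 6 *\<^sub>R C y" unfolding c0 C_def by simp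
    finally show "C (x + 2 *\<^sub>R y) - 3 *\<^sub>R C (x + y) + 3 *\<^sub>R C x - C (x - y) = 6 *\<^sub>R C y" .
  qed
  have est: "norm (f x - A x - C x) \<le> K * norm x ^ p" for x
  proof -
    have "f x - A x - C x = (1/6::real) *\<^sub>R ((h x - C0 x) - (g x - A0 x))"
      unfolding A_def C_def g_def h_def by norm
    then have "norm (f x - A x - C x) = (1/6) * norm ((h x - C0 x) - (g x - A0 x))" by simp
    also have "\<dots> \<le> (1/6) * (norm (h x - C0 x) + norm (g x - A0 x))"
      by (intro mult_left_mono norm_triangle_ineq4) simp
    also have "\<dots> \<le> (1/6) * (\<theta> / 2 / \<bar>8 - 2^(r+s)\<bar> * norm x ^ (r+s) + \<theta> / 2 / \<bar>2 - 2^(r+s)\<bar> * norm x ^ (r+s))"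
      using A0(4) C0(4) by (intro mult_left_mono add_mono) auto
    also have "\<dots> = K * norm x ^ p"
      unfolding K_def p_def by (simp add: abs_minus_commute algebra_simps)
    finally show ?thesis .
  qed
  have uniq: "A1 = A \<and> C1 = C" if addA1: "Modules.additive A1" and cubC1: "cubic C1"
    and est1: "\<forall>x. norm (f x - A1 x - C1 x) \<le> K * norm x ^ p" for A1 C1
  proof -
    define a where "a x = A1 x - A x" for x
    define c where "c x = C1 x - C x" for x
    have adda: "Modules.additive a"
      unfolding a_def by (rule additive.intro) (simp add: additive.add[OF addA1] additive.add[OF addA])
    have cubc: "cubic c" unfolding cubic_def
    proof (intro allI)
      fix x y :: 'a
      have z1: "C1 (x + 2 *\<^sub>R y) - 3 *\<^sub>R C1 (x + y) + 3 *\<^sub>R C1 x - C1 (x - y) - 6 *\<^sub>R C1 y = 0"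
        using cubC1 unfolding cubic_def by simp
      have z2: "C (x + 2 *\<^sub>R y) - 3 *\<^sub>R C (x + y) + 3 *\<^sub>R C x - C (x - y) - 6 *\<^sub>R C y = 0"
        using cubC unfolding cubic_def by simp
      have "c (x + 2 *\<^sub>R y) - 3 *\<^sub>R c (x + y) + 3 *\<^sub>R c x - c (x - y) - 6 *\<^sub>R c y
        = (C1 (x + 2 *\<^sub>R y) - 3 *\<^sub>R C1 (x + y) + 3 *\<^sub>R C1 x - C1 (x - y) - 6 *\<^sub>R C1 y)
        - (C (x + 2 *\<^sub>R y) - 3 *\<^sub>R C (x + y) + 3 *\<^sub>R C x - C (x - y) - 6 *\<^sub>R C y)"
        unfolding c_def by norm
      then have "c (x + 2 *\<^sub>R y) - 3 *\<^sub>R c (x + y) + 3 *\<^sub>R c x - c (x - y) - 6 *\<^sub>R c y = 0"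
        unfolding z1 z2 by simp
      then show "c (x + 2 *\<^sub>R y) - 3 *\<^sub>R c (x + y) + 3 *\<^sub>R c x - c (x - y) = 6 *\<^sub>R c y" by simp
    qed
    have bd: "norm (a y + c y) \<le> (2 * K) * norm y ^ p" for y
    proof -
      have "a y + c y = (f y - A y - C y) - (f y - A1 y - C1 y)" unfolding a_def c_def by norm
      then have "norm (a y + c y) \<le> norm (f y - A y - C y) + norm (f y - A1 y - C1 y)"
        by (metis norm_triangle_ineq4)
      also have "\<dots> \<le> K * norm y ^ p + K * norm y ^ p" using est[of y] est1 by (intro add_mono) auto
      finally show ?thesis by simp
    qed
    have a2: "a (2 *\<^sub>R y) = 2 *\<^sub>R a y" for y
      using additive.add[OF adda, of y y] by (simp add: scaleR_2)
    have ah: "a ((1/2) *\<^sub>R y) = (1/2) *\<^sub>R a y" for y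
      using a2[of "(1/2) *\<^sub>R y"] by simp
    have c2: "c (2 *\<^sub>R y) = 2^3 *\<^sub>R c y" for y
      using cubic_props[OF cubc, of y] by simp
    have ch: "c ((1/2) *\<^sub>R y) = (1/2)^3 *\<^sub>R c y" for y
      using c2[of "(1/2) *\<^sub>R y"] by (simp add: power_divide)
    have scaled: "norm (t^n *\<^sub>R a x + (t^3)^n *\<^sub>R c x) \<le> (2 * K * norm x ^ p) * (t^p)^n"
      if t: "t > 0" and ta: "\<And>y. a (t *\<^sub>R y) = t *\<^sub>R a y" and tc: "\<And>y. c (t *\<^sub>R y) = t^3 *\<^sub>R c y"
      for t :: real and n x
    proof -
      have "a (t^n *\<^sub>R x) = t^n *\<^sub>R a x" by (rule scal_pow) (rule ta)
      moreover have "c (t^n *\<^sub>R x) = (t^3)^n *\<^sub>R c x" by (rule scal_pow) (rule tc)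
      moreover have "norm (t^n *\<^sub>R x) ^ p = (t^p)^n * norm x ^ p"
        using t by (simp add: power_mult_distrib flip: power_mult) (simp add: mult.commute)
      ultimately show ?thesis using bd[of "t^n *\<^sub>R x"] by (simp add: mult_ac)
    qed
    have S2: "norm (2^n *\<^sub>R a x + (2^3)^n *\<^sub>R c x) \<le> (2 * K * norm x ^ p) * (2^p)^n" for n x
      by (rule scaled) (use a2 c2 in auto)
    have Sh: "norm ((1/2)^n *\<^sub>R a x + ((1/2)^3)^n *\<^sub>R c x) \<le> (2 * K * norm x ^ p) * ((1/2)^p)^n" for n x
      by (rule scaled) (use ah ch in auto)
    have pc: "p = 0 \<or> p = 2 \<or> p \<ge> 4" using p_ne1 p_ne3 unfolding p_def by linarith
    have az: "a x = 0 \<and> c x = 0" for x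
    proof -
      have ca: "a x = 0" if "p \<ge> 2"
      proof -
        have h4: "(1/2::real)^p \<le> (1/2)^2" using that by (intro power_decreasing) auto
        have "((1/2)^2::real) = 1/4" by (simp add: power2_eq_square)
        with h4 have lt2: "(1/2::real)^p < 1/2" by linarith
        show ?thesis
        proof (rule vanish[of "(1/2)^3" "c x" "1/2" "a x" "2 * K * norm x ^ p" "(1/2)^p"])
          show "norm (((1/2)^3)^n *\<^sub>R c x + (1/2)^n *\<^sub>R a x) \<le> 2 * K * norm x ^ p * ((1/2)^p)^n" for n
            using Sh[of n x] by (simp add: add.commute)
        qed (use lt2 in \<open>auto simp: power_divide\<close>)
      qed
      show ?thesis
      proof (cases "p = 0")
        case True
        have cz: "c x = 0"
          by (rule vanish[of 2 "a x" "2^3" "c x" "2 * K * norm x ^ p" "2^p"]) (use S2 True in auto)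
        have "a x = 0"
          by (rule vanish[of 1 "c x" 2 "a x" "2 * K * norm x ^ p" 1]) (use S2[of _ x] True cz in auto)
        with cz show ?thesis by simp
      next
        case False
        then have p2: "p \<ge> 2" using pc by auto
        have az: "a x = 0" using ca p2 by blast
        show ?thesis
        proof (cases "p = 2")
          case True
          have "c x = 0"
            by (rule vanish[of 2 "a x" "2^3" "c x" "2 * K * norm x ^ p" "2^p"]) (use S2 True in auto)
          with az show ?thesis by simp
        next
          case False
          then have p4: "p \<ge> 4" using pc p2 by auto
          have h4: "(1/2::real)^p \<le> (1/2)^4" using p4 by (intro power_decreasing) auto
          have "((1/2)^4::real) = 1/16" "((1/2)^3::real) = 1/8" by (simp_all add: power_divide)
          with h4 have lt: "(1/2::real)^p < (1/2)^3" by linarith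
          have "c x = 0"
          proof (rule vanish[of "1/16" "a x" "(1/2)^3" "c x" "2 * K * norm x ^ p" "(1/2)^p"])
            show "norm ((1/16)^n *\<^sub>R a x + ((1/2)^3)^n *\<^sub>R c x) \<le> 2 * K * norm x ^ p * ((1/2)^p)^n" for n
              using Sh[of n x] az by simp
          qed (use lt in \<open>auto simp: power_divide\<close>)
          with az show ?thesis by simp
        qed
      qed
    qed
    have "A1 = A" using az unfolding a_def by (intro ext) simp
    moreover have "C1 = C" using az unfolding c_def by (intro ext) simp
    ultimately show ?thesis by simp
  qed
  show ?thesis
  proof (rule ex1I[of _ "(A, C)"])
    show "Modules.additive (fst (A, C)) \<and> cubic (snd (A, C)) \<and>
           (\<forall>x. norm (f x - fst (A, C) x - snd (A, C) x)
                 \<le> \<theta> / 12 * (1 / \<bar>(2::real) ^ (r + s) - 2\<bar> + 1 / \<bar>(2::real) ^ (r + s) - 8\<bar>) * norm x ^ (r + s))"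
      using addA cubC est unfolding K_def p_def by simp
  next
    fix AC
    assume "Modules.additive (fst AC) \<and> cubic (snd AC) \<and>
           (\<forall>x. norm (f x - fst AC x - snd AC x)
                 \<le> \<theta> / 12 * (1 / \<bar>(2::real) ^ (r + s) - 2\<bar> + 1 / \<bar>(2::real) ^ (r + s) - 8\<bar>) * norm x ^ (r + s))"
    then have "fst AC = A \<and> snd AC = C" by (intro uniq) (auto simp: K_def p_def)
    then show "AC = (A, C)" by (simp add: prod_eq_iff)
  qed
qed


end
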